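(* Fix $p\in(0,1)$ and $\lambda\in\mathbb{R}$. For any fixed $T>0$ and $a\in(0,\frac{p}{1+p})$ there exist $b_{T,a}>0$ and $C_{T,a}>0$ such that for all $b\ge b_{T,a}$ and all $t\in[ap\log b,T+ap\log b]$: if $p\in(0,\frac12)$, then $$|\gamma_h(t)|\le C_{T,a}\left[(|\lambda|b^{-2p(1-a)}+b^{-4p(1-a)})e^{-t/p}+(|\lambda|b^{-2p}+b^{-4p})e^{t/p}\right];$$ if $p\in[\frac12,1)$, then $$|\gamma_h(t)|\le C_{T,a}\left[(|\lambda|b^{-2p(1-a)}+b^{-4p(1-a)})e^{-t/p}+(|\lambda|b^{-2p}+b^{-4p(1-a)})e^{t/p}\right].$$ The same bounds hold for $\gamma_h'(t)$.
   Context: Let $\Theta_h(t)=\dfrac{e^{t/p}}{(1+\alpha_pe^{2t})^{1/p}}$ with $\alpha_p=\frac{p^2}{4(1+p)}$. Let $\Sigma$ be a solution of the linear equation $\Sigma''-\frac{1}{p^2}\Sigma+(2p+1)\Theta_h^{2p}\Sigma=0$ normalized by the Wronskian relation $\Theta_h'(t)\Sigma'(t)-\Theta_h''(t)\Sigma(t)=1$ for all $t$ (the expression below does not depend on which such $\Sigma$ is chosen). Let $f_b(t)=-\lambda b^{-2p}e^{2t}+b^{-4p}e^{4t}$ and define $$\gamma_h(t)=\Sigma(t)\int_{-\infty}^t f_b(t')\Theta_h'(t')\Theta_h(t')\,dt'-\Theta_h'(t)\int_{-\infty}^t f_b(t')\Sigma(t')\Theta_h(t')\,dt'.$$ *)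

theory Defs
  imports "HOL-Analysis.Analysis"
begin

definition alpha_p :: "real \<Rightarrow> real" where
  "alpha_p p = p^2 / (4 * (1 + p))"

definition Theta_h :: "real \<Rightarrow> real \<Rightarrow> real" where
  "Theta_h p t = exp (t / p) / (1 + alpha_p p * exp (2 * t)) powr (1 / p)"

definition f_b :: "real \<Rightarrow> real \<Rightarrow> real \<Rightarrow> real \<Rightarrow> real" where
  "f_b p lam b t = - lam * b powr (-2 * p) * exp (2 * t) + b powr (-4 * p) * exp (4 * t)"

text \<open>gamma_h; integrals over (-infinity, t] are Henstock-Kurzweil integrals over the ray.\<close>
definition gamma_h :: "real \<Rightarrow> real \<Rightarrow> real \<Rightarrow> (real \<Rightarrow> real) \<Rightarrow> real \<Rightarrow> real" where
  "gamma_h p lam b Sg t =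
     Sg t * integral {..t} (\<lambda>s. f_b p lam b s * deriv (Theta_h p) s * Theta_h p s)
     - deriv (Theta_h p) t * integral {..t} (\<lambda>s. f_b p lam b s * Sg s * Theta_h p s)"

end

theory Submission
  imports Defs
begin


lemma exp_ray:
  fixes c t :: real
  assumes c: "c > 0"
  shows "((\<lambda>x. exp (c*x)) has_integral exp(c*t)/c) {..t}"
proof -
  have h: "((\<lambda>x. exp (-c*x)) has_integral exp(-c*(-t))/c) {-t..}"
    using has_integral_exp_minus_to_infinity[OF c] by blast
  have "(\<lambda>x. exp (c*(-x))) absolutely_integrable_on {-t..} \<and> integral {-t..} (\<lambda>x. exp (c*(-x))) = exp(c*t)/c"
    using h by (auto intro!: nonnegative_absolutely_integrable_1 simp: has_integral_iff)
  then have "(\<lambda>x. exp (c*x)) absolutely_integrable_on {..t} \<and> integral {..t} (\<lambda>x. exp (c*x)) = exp(c*t)/c"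
    by (subst (asm) has_absolute_integral_reflect_real[where B="{..t}"]) auto
  then show ?thesis
    using absolutely_integrable_on_def has_integral_iff by blast
qed

lemma ray_bound:
  fixes F :: "real \<Rightarrow> real"
  assumes cont: "continuous_on UNIV F" and c: "c > 0"
    and bd: "\<And>s. s \<le> t \<Longrightarrow> abs (F s) \<le> K * exp (c * s)"
  shows "(F integrable_on {..t}) \<and> \<bar>integral {..t} F\<bar> \<le> K * exp (c*t) / c"
proof -
  have g: "((\<lambda>x. K * exp (c*x)) has_integral K * (exp(c*t)/c)) {..t}"
    using has_integral_mult_right[OF exp_ray[OF c]] .
  have m: "F \<in> borel_measurable (lebesgue_on {..t})"
    using cont by (intro continuous_imp_measurable_on_sets_lebesgue) (auto intro: continuous_on_subset)
  have L: "{..t} \<in> sets lebesgue" by simp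
  have "norm (integral {..t} F) \<le> K * (exp(c*t)/c)"
    by (rule integral_norm_bound_integral'[OF _ m _ g]) (use bd in auto)
  moreover have "F integrable_on {..t}"
    using measurable_bounded_by_integrable_imp_integrable_real[OF m _ _ L] g bd
    by (metis atMost_iff has_integral_integrable)
  ultimately show ?thesis by simp
qed

lemma split_ray:
  fixes F :: "real \<Rightarrow> real"
  assumes cont: "continuous_on UNIV F" and i: "F integrable_on {..a}" and at: "a \<le> t"
  shows "F integrable_on {..t} \<and> integral {..t} F = integral {..a} F + integral {a..t} F"
proof -
  have i2: "F integrable_on {a..t}"
    using cont by (intro integrable_continuous_interval) (auto intro: continuous_on_subset)
  have e: "{..t} = {..a} \<union> {a..t}" using at by auto
  have n: "negligible ({..a} \<inter> {a..t})"
    using at by (subgoal_tac "{..a} \<inter> {a..t} = {a}") auto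
  show ?thesis unfolding e using integral_Un[OF i i2 n] integrable_Un[OF n i i2] by simp
qed

lemma ray_bound2:
  fixes F :: "real \<Rightarrow> real"
  assumes cont: "continuous_on UNIV F" and c: "c > 0" and d: "d > 0"
    and bd1: "\<And>s. s \<le> 0 \<Longrightarrow> abs (F s) \<le> K * exp (c * s)"
    and bd2: "\<And>s. s \<ge> 0 \<Longrightarrow> abs (F s) \<le> K * exp (- d * s)"
  shows "(F integrable_on {..t}) \<and> abs (integral {..t} F) \<le> K / c + K / d"
proof -
  have K: "K \<ge> 0" using bd1[of 0] by simp
  show ?thesis
  proof (cases "t \<le> 0")
    case True
    have "(F integrable_on {..t}) \<and> abs (integral {..t} F) \<le> K * exp (c*t) / c"
      by (rule ray_bound[OF cont c]) (use bd1 True in auto)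
    moreover have "K * exp (c*t) / c \<le> K / c + K / d"
    proof -
      have "exp (c*t) \<le> 1" using True c by (simp add: mult_nonneg_nonpos)
      then have "K * exp (c*t) \<le> K" using K by (simp add: mult_left_le)
      then have "K * exp (c*t) / c \<le> K / c" using c by (simp add: divide_right_mono)
      moreover have "K / d \<ge> 0" using K d by simp
      ultimately show ?thesis by linarith
    qed
    ultimately show ?thesis by linarith
  next
    case False
    have r0: "(F integrable_on {..0}) \<and> abs (integral {..0} F) \<le> K * exp (c*0) / c"
      by (rule ray_bound[OF cont c]) (use bd1 in auto)
    have sp: "F integrable_on {..t} \<and> integral {..t} F = integral {..0} F + integral {0..t} F"
      using split_ray[OF cont _, of 0 t] r0 False by auto
    have i2: "F integrable_on {0..t}"
      using cont by (intro integrable_continuous_interval) (auto intro: continuous_on_subset)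
    have ge: "((\<lambda>s. K * exp (- d * s)) has_integral K * (exp (- d * 0) / d)) {0..}"
      using has_integral_mult_right[OF has_integral_exp_minus_to_infinity[OF d, of 0]] .
    have ii: "(\<lambda>s. K * exp (- d * s)) integrable_on {0..t}"
      by (intro integrable_continuous_interval continuous_intros)
    have "norm (integral {0..t} F) \<le> integral {0..t} (\<lambda>s. K * exp (- d * s))"
      by (rule integral_norm_bound_integral[OF i2 ii]) (use bd2 in auto)
    then have "abs (integral {0..t} F) \<le> integral {0..t} (\<lambda>s. K * exp (- d * s))" by simp
    also have "\<dots> \<le> integral {0..} (\<lambda>s. K * exp (- d * s))"
      by (rule integral_subset_le) (use ge K in \<open>auto intro!: integrable_continuous_interval continuous_intros simp: has_integral_integrable\<close>)
    also have "\<dots> = K * (exp (- d * 0) / d)" by (rule integral_unique[OF ge])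
    also have "\<dots> = K / d" by simp
    finally show ?thesis using sp r0 by auto
  qed
qed

lemma ray_deriv:
  fixes F :: "real \<Rightarrow> real"
  assumes cont: "continuous_on UNIV F" and i: "\<And>t. F integrable_on {..t}"
  shows "((\<lambda>t. integral {..t} F) has_real_derivative F x) (at x)"
proof -
  have d0: "((\<lambda>y. integral {x-1..y} F) has_real_derivative F x) (at x within {x-1..x+1})"
    using cont by (intro integral_has_real_derivative) (auto intro: continuous_on_subset)
  have "x \<in> interior {x-1..x+1}" by auto
  then have d1: "((\<lambda>y. integral {x-1..y} F) has_real_derivative F x) (at x)"
    using d0 at_within_interior by metis
  have d2: "((\<lambda>y. integral {..x-1} F + integral {x-1..y} F) has_real_derivative F x) (at x)"
    using DERIV_add[OF DERIV_const d1] by simp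
  show ?thesis
  proof (rule has_field_derivative_transform_within_open[OF d2, of "{x-1<..}"])
    fix y assume "y \<in> {x-1<..}"
    then have "x - 1 \<le> y" by simp
    then show "integral {..x-1} F + integral {x-1..y} F = integral {..y} F"
      using split_ray[OF cont i, of "x-1" y] by simp
  qed auto
qed



definition phi1 :: "real \<Rightarrow> real \<Rightarrow> real" where
  "phi1 p t = (1 - alpha_p p * exp (2*t)) / (p * (1 + alpha_p p * exp (2*t)))"
definition phi2 :: "real \<Rightarrow> real \<Rightarrow> real" where
  "phi2 p t = - 4 * alpha_p p * exp (2*t) / (p * (1 + alpha_p p * exp (2*t))^2)"
definition Th1 :: "real \<Rightarrow> real \<Rightarrow> real" where
  "Th1 p t = Theta_h p t * phi1 p t"
definition Th2 :: "real \<Rightarrow> real \<Rightarrow> real" where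
  "Th2 p t = Theta_h p t * ((phi1 p t)^2 + phi2 p t)"

lemma alpha_pos: "p > 0 \<Longrightarrow> alpha_p p > 0"
  by (simp add: alpha_p_def)

lemma Theta_exp:
  assumes "p > 0"
  shows "Theta_h p t = exp ((t - ln (1 + alpha_p p * exp (2*t))) / p)"
proof -
  have A: "1 + alpha_p p * exp (2*t) > 0" using alpha_pos[OF assms]
    by (simp add: add_pos_pos)
  show ?thesis unfolding Theta_h_def using A
    by (simp add: powr_def exp_diff[symmetric] diff_divide_distrib)
qed

lemma Theta_deriv:
  assumes p: "p > 0"
  shows "(Theta_h p has_real_derivative Th1 p t) (at t)"
proof -
  let ?a = "alpha_p p"
  have a: "?a > 0" using alpha_pos[OF p] .
  have A: "1 + ?a * exp (2*t) > 0" using a by (simp add: add_pos_pos)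
  have "((\<lambda>t. exp ((t - ln (1 + ?a * exp (2*t))) / p)) has_real_derivative
        exp ((t - ln (1 + ?a * exp (2*t))) / p) * ((1 - ?a * (exp (2*t) * 2) / (1 + ?a * exp (2*t))) / p)) (at t)"
    using A p by (auto intro!: derivative_eq_intros)
  moreover have "exp ((t - ln (1 + ?a * exp (2*t))) / p) * ((1 - ?a * (exp (2*t) * 2) / (1 + ?a * exp (2*t))) / p) = Th1 p t"
  proof -
    have "(1 - ?a * (exp (2*t) * 2) / (1 + ?a * exp (2*t))) / p = (1 - ?a * exp (2*t)) / (p * (1 + ?a * exp (2*t)))"
      using A p by (simp add: field_simps)
    then show ?thesis unfolding Th1_def phi1_def Theta_exp[OF p] by simp
  qed
  ultimately show ?thesis using Theta_exp[OF p] by (metis (no_types, lifting) ext)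
qed

lemma phi1_deriv:
  assumes p: "p > 0"
  shows "(phi1 p has_real_derivative phi2 p t) (at t)"
proof -
  let ?a = "alpha_p p"
  have a: "?a > 0" using alpha_pos[OF p] .
  have A: "1 + ?a * exp (2*t) > 0" using a by (simp add: add_pos_pos)
  have "((\<lambda>t. (1 - ?a * exp (2*t)) / (p * (1 + ?a * exp (2*t)))) has_real_derivative
     ((- (?a * (exp (2*t) * 2))) * (p * (1 + ?a * exp (2*t))) - (1 - ?a * exp (2*t)) * (p * (?a * (exp (2*t) * 2))))
       / (p * (1 + ?a * exp (2*t)))^2) (at t)"
    using A p by (auto intro!: derivative_eq_intros simp: power2_eq_square)
  moreover have "((- (?a * (exp (2*t) * 2))) * (p * (1 + ?a * exp (2*t))) - (1 - ?a * exp (2*t)) * (p * (?a * (exp (2*t) * 2))))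
       / (p * (1 + ?a * exp (2*t)))^2 = phi2 p t"
  proof -
    have "(- (?a * (exp (2*t) * 2))) * (p * (1 + ?a * exp (2*t))) - (1 - ?a * exp (2*t)) * (p * (?a * (exp (2*t) * 2)))
        = p * (- 4 * ?a * exp (2*t))" by (simp add: algebra_simps)
    then show ?thesis unfolding phi2_def using p A by (simp add: power_mult_distrib power2_eq_square mult_ac)
  qed
  ultimately show ?thesis unfolding phi1_def[abs_def] by simp
qed

lemma Th1_deriv:
  assumes p: "p > 0"
  shows "(Th1 p has_real_derivative Th2 p t) (at t)"
proof -
  have "((\<lambda>t. Theta_h p t * phi1 p t) has_real_derivative Th1 p t * phi1 p t + phi2 p t * Theta_h p t) (at t)"
    by (rule DERIV_mult[OF Theta_deriv[OF p] phi1_deriv[OF p]])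
  then show ?thesis unfolding Th1_def[abs_def] Th2_def Th1_def by (simp add: algebra_simps power2_eq_square)
qed

lemma deriv_Theta: "p > 0 \<Longrightarrow> deriv (Theta_h p) = Th1 p"
  using Theta_deriv DERIV_imp_deriv by blast

lemma deriv2_Theta: "p > 0 \<Longrightarrow> deriv (deriv (Theta_h p)) = Th2 p"
  using Th1_deriv DERIV_imp_deriv deriv_Theta by (metis (no_types, lifting) ext)



lemma Theta_pos: "p > 0 \<Longrightarrow> Theta_h p t > 0"
  by (simp add: Theta_exp)

lemma Theta_le1:
  assumes p: "p > 0" shows "Theta_h p t \<le> exp (t / p)"
proof -
  have "ln (1 + alpha_p p * exp (2*t)) \<ge> 0" using alpha_pos[OF p] by simp
  then have "(t - ln (1 + alpha_p p * exp (2*t))) / p \<le> t / p" using p by (simp add: divide_right_mono)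
  then show ?thesis by (simp add: Theta_exp[OF p])
qed

lemma Theta_le2:
  assumes p: "p > 0" shows "Theta_h p t \<le> exp (- ln (alpha_p p) / p) * exp (- t / p)"
proof -
  let ?a = "alpha_p p"
  have a: "?a > 0" using alpha_pos[OF p] .
  have "ln (?a * exp (2*t)) \<le> ln (1 + ?a * exp (2*t))" using a by (subst ln_le_cancel_iff) (auto simp: add_pos_pos)
  then have "ln ?a + 2*t \<le> ln (1 + ?a * exp (2*t))" using a by (simp add: ln_mult)
  then have "(t - ln (1 + ?a * exp (2*t))) / p \<le> (- ln ?a - t) / p" using p by (simp add: divide_right_mono)
  then show ?thesis by (simp add: Theta_exp[OF p] exp_add[symmetric] diff_divide_distrib)
qed

lemma Theta_ge_right:
  assumes p: "p > 0" and t: "alpha_p p * exp (2*t) \<ge> 2"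
  shows "Theta_h p t \<ge> exp (- ln (3 * alpha_p p / 2) / p) * exp (- t / p)"
proof -
  let ?a = "alpha_p p"
  have a: "?a > 0" using alpha_pos[OF p] .
  have "1 + ?a * exp (2*t) \<le> (3 * ?a / 2) * exp (2*t)" using t by simp
  then have "ln (1 + ?a * exp (2*t)) \<le> ln ((3 * ?a / 2) * exp (2*t))" using a by (simp add: add_pos_pos)
  moreover have "ln ((3 * ?a / 2) * exp (2*t)) = ln (3 * ?a / 2) + 2*t" using a by (subst ln_mult) auto
  ultimately have "ln (1 + ?a * exp (2*t)) \<le> ln (3 * ?a / 2) + 2*t" by linarith
  then have "(- ln (3 * ?a / 2) - t) / p \<le> (t - ln (1 + ?a * exp (2*t))) / p" using p by (simp add: divide_right_mono)
  then show ?thesis by (simp add: Theta_exp[OF p] exp_add[symmetric] diff_divide_distrib)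
qed

lemma Theta_ge_left:
  assumes p: "p > 0" and t: "alpha_p p * exp (2*t) \<le> 1/2"
  shows "Theta_h p t \<ge> exp (- ln (3 / 2) / p) * exp (t / p)"
proof -
  let ?a = "alpha_p p"
  have a: "?a > 0" using alpha_pos[OF p] .
  have "ln (1 + ?a * exp (2*t)) \<le> ln (3/2)" using t a by (simp add: add_pos_pos)
  then have "(- ln (3 / 2) + t) / p \<le> (t - ln (1 + ?a * exp (2*t))) / p" using p by (simp add: divide_right_mono)
  then show ?thesis by (simp add: Theta_exp[OF p] exp_add[symmetric] add_divide_distrib diff_divide_distrib)
qed

lemma phi1_bound:
  assumes p: "p > 0" shows "\<bar>phi1 p t\<bar> \<le> 1 / p"
proof -
  let ?a = "alpha_p p"  let ?E = "exp (2*t)"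
  have a: "?a * ?E > 0" using alpha_pos[OF p] by simp
  have "\<bar>1 - ?a * ?E\<bar> \<le> 1 + ?a * ?E" using a by simp
  then have "\<bar>1 - ?a * ?E\<bar> / (p * (1 + ?a * ?E)) \<le> (1 + ?a * ?E) / (p * (1 + ?a * ?E))"
    using a p by (intro divide_right_mono) auto
  also have "\<dots> = 1 / p" using a p by simp
  finally show ?thesis unfolding phi1_def using a p by (simp add: abs_mult)
qed

lemma sq_aux: fixes x :: real assumes "x > 0" shows "x \<le> (1 + x)^2"
proof -
  have "x * x \<ge> 0" by simp
  then show ?thesis using assms by (simp add: power2_eq_square algebra_simps)
qed

lemma phi2_bound:
  assumes p: "p > 0" shows "\<bar>phi2 p t\<bar> \<le> 4 / p"
proof -
  let ?a = "alpha_p p"  let ?E = "exp (2*t)"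
  have a: "?a * ?E > 0" using alpha_pos[OF p] by simp
  have "?a * ?E \<le> (1 + ?a * ?E)^2" using sq_aux[OF a] .
  then have "4 * (?a * ?E) / (p * (1 + ?a * ?E)^2) \<le> 4 * (1 + ?a * ?E)^2 / (p * (1 + ?a * ?E)^2)"
    using a p by (intro divide_right_mono) auto
  also have "\<dots> = 4 / p" using a p by simp
  finally show ?thesis unfolding phi2_def using a p alpha_pos[OF p] by (simp add: abs_mult mult.assoc)
qed

lemma phi1_right:
  assumes p: "p > 0" and t: "alpha_p p * exp (2*t) \<ge> 2"
  shows "phi1 p t \<le> - 1 / (3*p)"
proof -
  let ?a = "alpha_p p"  let ?E = "exp (2*t)"
  have a: "?a * ?E > 0" using alpha_pos[OF p] by simp
  have "3 * (1 - ?a * ?E) \<le> - (1 + ?a * ?E)" using t by simp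
  then have "1 - ?a * ?E \<le> (- 1 / (3*p)) * (p * (1 + ?a * ?E))" using p by (simp add: field_simps)
  then show ?thesis unfolding phi1_def using p a by (subst pos_divide_le_eq) (auto simp: add_pos_pos)
qed

lemma phi1_left:
  assumes p: "p > 0" and t: "alpha_p p * exp (2*t) \<le> 1/2"
  shows "phi1 p t \<ge> 1 / (3*p)"
proof -
  let ?a = "alpha_p p"  let ?E = "exp (2*t)"
  have a: "?a * ?E > 0" using alpha_pos[OF p] by simp
  have "(1 + ?a * ?E) \<le> 3 * (1 - ?a * ?E)" using t by simp
  then have "(1 / (3*p)) * (p * (1 + ?a * ?E)) \<le> 1 - ?a * ?E" using p by (simp add: field_simps)
  then show ?thesis unfolding phi1_def using p a by (subst pos_le_divide_eq) (auto simp: add_pos_pos)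
qed



locale sig =
  fixes p :: real and Sg Sg' :: "real \<Rightarrow> real"
  assumes p0: "0 < p" and p1: "p < 1"
    and dS: "\<And>t. (Sg has_real_derivative Sg' t) (at t)"
    and W: "\<And>t. Th1 p t * Sg' t - Th2 p t * Sg t = 1"
begin

lemma a_pos: "alpha_p p > 0" using alpha_pos[OF p0] .

lemma a_lt1: "alpha_p p < 1"
proof -
  have "p * p < p" using mult_strict_right_mono[OF p1 p0] by simp
  moreover have "p < 4 * (1 + p)" using p0 by simp
  ultimately have "p^2 < 4 * (1 + p)" unfolding power2_eq_square by (rule less_trans)
  then show ?thesis unfolding alpha_p_def using p0 by simp
qed

lemma u_deriv:
  assumes "Th1 p t \<noteq> 0"
  shows "((\<lambda>s. Sg s / Th1 p s) has_real_derivative 1 / (Th1 p t)^2) (at t)"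
proof -
  have "((\<lambda>s. Sg s / Th1 p s) has_real_derivative (Sg' t * Th1 p t - Sg t * Th2 p t) / (Th1 p t * Th1 p t)) (at t)"
    by (rule DERIV_divide[OF dS Th1_deriv[OF p0] assms])
  moreover have "Sg' t * Th1 p t - Sg t * Th2 p t = 1" using W[of t] by (simp add: mult.commute)
  ultimately show ?thesis by (simp add: power2_eq_square)
qed

lemma Th1_abs_le: "\<bar>Th1 p t\<bar> \<le> Theta_h p t / p"
proof -
  have "\<bar>Th1 p t\<bar> = Theta_h p t * \<bar>phi1 p t\<bar>" unfolding Th1_def using Theta_pos[OF p0, of t] by (simp add: abs_mult)
  also have "\<dots> \<le> Theta_h p t * (1/p)" using phi1_bound[OF p0] Theta_pos[OF p0, of t] by (intro mult_left_mono) auto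
  finally show ?thesis by simp
qed

lemma Th2_abs_le: "\<bar>Th2 p t\<bar> \<le> Theta_h p t * (1/p^2 + 4/p)"
proof -
  have "\<bar>(phi1 p t)^2 + phi2 p t\<bar> \<le> (phi1 p t)^2 + \<bar>phi2 p t\<bar>" by (simp add: abs_triangle_ineq[THEN order_trans])
  also have "\<dots> \<le> (1/p)^2 + 4/p"
  proof -
    have "(phi1 p t)^2 \<le> (1/p)^2" using phi1_bound[OF p0, of t]
      by (metis abs_le_square_iff abs_of_pos p0 zero_less_divide_1_iff)
    then show ?thesis using phi2_bound[OF p0, of t] by linarith
  qed
  finally have "\<bar>(phi1 p t)^2 + phi2 p t\<bar> \<le> 1/p^2 + 4/p" by (simp add: power_divide)
  then show ?thesis unfolding Th2_def using Theta_pos[OF p0, of t]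
    by (simp add: abs_mult mult_left_mono)
qed

lemma right_bound:
  "\<exists>K. \<forall>t. alpha_p p * exp (2*t) \<ge> 2 \<longrightarrow> \<bar>Sg t\<bar> \<le> K * exp (t/p) \<and> \<bar>Sg' t\<bar> \<le> K * exp (t/p)"
proof -
  define a where "a = alpha_p p"
  have a: "a > 0" "a < 1" using a_pos a_lt1 by (auto simp: a_def)
  define t1 where "t1 = ln (2/a) / 2"
  have E1: "a * exp (2*t1) = 2" unfolding t1_def using a by simp
  have t1le: "t1 \<le> t" if "a * exp (2*t) \<ge> 2" for t
  proof -
    have "a * exp (2*t1) \<le> a * exp (2*t)" using E1 that by simp
    then have "exp (2*t1) \<le> exp (2*t)" using a mult_le_cancel_left_pos by blast
    then show ?thesis by simp
  qed
  have tge: "a * exp (2 * s) \<ge> 2" if "t1 \<le> s" for s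
  proof -
    have e: "exp (2*t1) \<le> exp (2 * s)" using that by simp
    show ?thesis using mult_left_mono[OF e, of a] E1 a by simp
  qed
  have t1pos: "t1 \<ge> 0"
  proof -
    have "2/a > 1" using a by simp
    then show ?thesis unfolding t1_def by simp
  qed
  define cA where "cA = exp (- ln a / p)"
  define cR where "cR = exp (- ln (3 * a / 2) / p)"
  define c1 where "c1 = cR / (3*p)"
  have c1: "c1 > 0" unfolding c1_def cR_def using p0 by simp
  have cA: "cA > 0" unfolding cA_def by simp
  have Th1low: "c1 / exp (s/p) \<le> \<bar>Th1 p s\<bar>" if "t1 \<le> s" for s
  proof -
    have s2: "alpha_p p * exp (2 * s) \<ge> 2" using tge[OF that] a_def by simp
    have "cR * exp (- s / p) \<le> Theta_h p s" using Theta_ge_right[OF p0 s2] unfolding cR_def a_def .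
    moreover have "\<bar>phi1 p s\<bar> \<ge> 1/(3*p)" using phi1_right[OF p0 s2] p0 by simp
    ultimately have "cR * exp (- s / p) * (1/(3*p)) \<le> Theta_h p s * \<bar>phi1 p s\<bar>"
      using p0 Theta_pos[OF p0, of s] by (intro mult_mono) (auto simp: cR_def)
    moreover have "\<bar>Th1 p s\<bar> = Theta_h p s * \<bar>phi1 p s\<bar>" unfolding Th1_def using Theta_pos[OF p0, of s] by (simp add: abs_mult)
    moreover have "cR * exp (- s / p) * (1/(3*p)) = c1 / exp (s/p)" unfolding c1_def by (simp add: exp_minus field_simps)
    ultimately show ?thesis by simp
  qed
  have Th1up: "\<bar>Th1 p s\<bar> \<le> (cA / p) / exp (s/p)" for s
  proof -
    have "Theta_h p s \<le> cA * exp (- s / p)" using Theta_le2[OF p0, of s] unfolding cA_def a_def .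
    then have "Theta_h p s / p \<le> cA * exp (- s / p) / p" using p0 by (simp add: divide_right_mono)
    then show ?thesis using Th1_abs_le[of s] by (simp add: exp_minus field_simps)
  qed
  define cT where "cT = cA * (1/p^2 + 4/p)"
  have cT: "cT \<ge> 0" unfolding cT_def using cA p0 by simp
  have Th2up: "\<bar>Th2 p s\<bar> \<le> cT / exp (s/p)" for s
  proof -
    have "Theta_h p s \<le> cA * exp (- s / p)" using Theta_le2[OF p0, of s] unfolding cA_def a_def .
    then have "Theta_h p s * (1/p^2 + 4/p) \<le> cA * exp (- s / p) * (1/p^2 + 4/p)" using p0 by (intro mult_right_mono) auto
    then have "\<bar>Th2 p s\<bar> \<le> cA * exp (- s / p) * (1/p^2 + 4/p)" using Th2_abs_le[of s] by linarith
    also have "\<dots> = cT / exp (s/p)" unfolding cT_def by (simp add: exp_minus field_simps)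
    finally show ?thesis .
  qed
  define u where "u s = Sg s / Th1 p s" for s
  define h where "h s = p / (2 * c1^2) * exp (2 * s / p)" for s
  have nz: "Th1 p s \<noteq> 0" if "t1 \<le> s" for s
  proof -
    have "0 < c1 / exp (s/p)" using c1 by simp
    then have "0 < \<bar>Th1 p s\<bar>" using Th1low[OF that] by linarith
    then show ?thesis by simp
  qed
  have ud: "(u has_real_derivative 1 / (Th1 p s)^2) (at s)" if "t1 \<le> s" for s
    unfolding u_def[abs_def] using u_deriv[OF nz[OF that]] .
  have hd: "(h has_real_derivative exp (2 * s/p) / c1^2) (at s)" for s
    unfolding h_def[abs_def] using p0 c1 by (auto intro!: derivative_eq_intros simp: field_simps power2_eq_square)
  have uup: "1 / (Th1 p s)^2 \<le> exp (2 * s/p) / c1^2" if "t1 \<le> s" for s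
  proof -
    have "(c1 / exp (s/p))^2 \<le> (Th1 p s)^2" using Th1low[OF that] c1
      by (metis abs_le_square_iff abs_of_pos divide_pos_pos exp_gt_zero)
    moreover have "0 < (Th1 p s)^2" using nz[OF that] by simp
    moreover have "0 < (c1 / exp (s/p))^2" using c1 by simp
    ultimately have "1 / (Th1 p s)^2 \<le> 1 / (c1 / exp (s/p))^2" by (intro divide_left_mono) auto
    also have "\<dots> = exp (2 * s/p) / c1^2" by (simp add: power_divide exp_double[symmetric] power2_eq_square exp_add[symmetric])
    finally show ?thesis .
  qed
  obtain K where K: "K = max ((cA / p) * (\<bar>u t1\<bar> + p / (2 * c1^2))) ((1 + cT * ((cA / p) * (\<bar>u t1\<bar> + p / (2 * c1^2)))) / c1)" by blast
  show ?thesis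
  proof (intro exI[of _ K] allI impI)
    fix t assume t2: "alpha_p p * exp (2*t) \<ge> 2"
    have tt: "t1 \<le> t" using t1le t2 a_def by simp
    have m1: "u t1 \<le> u t"
    proof (rule DERIV_nonneg_imp_nondecreasing[OF tt])
      fix x assume "t1 \<le> x" "x \<le> t"
      then show "\<exists>y. (u has_real_derivative y) (at x) \<and> 0 \<le> y"
        using ud[of x] by (intro exI[of _ "1 / (Th1 p x)^2"]) simp
    qed
    have m2: "u t - h t \<le> u t1 - h t1"
    proof (rule DERIV_nonpos_imp_nonincreasing[OF tt])
      fix x assume "t1 \<le> x" "x \<le> t"
      then show "\<exists>y. ((\<lambda>s. u s - h s) has_real_derivative y) (at x) \<and> y \<le> 0"
        using DERIV_diff[OF ud[of x] hd[of x]] uup[of x] by (intro exI[of _ "1 / (Th1 p x)^2 - exp (2*x/p) / c1^2"]) simp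
    qed
    have h0: "h t1 \<ge> 0" unfolding h_def using p0 by simp
    have uabs: "\<bar>u t\<bar> \<le> \<bar>u t1\<bar> + h t" using m1 m2 h0 by linarith
    define X where "X = exp (t/p)"
    have X: "X \<ge> 1" unfolding X_def using tt t1pos p0 by simp
    have hX: "h t = p / (2 * c1^2) * X^2" unfolding h_def X_def by (simp add: exp_double[symmetric] power2_eq_square exp_add[symmetric])
    have Sgeq: "Sg t = u t * Th1 p t" unfolding u_def using nz[OF tt] by simp
    define KS where "KS = (cA / p) * (\<bar>u t1\<bar> + p / (2 * c1^2))"
    have KS: "KS \<ge> 0" unfolding KS_def using cA p0 by simp
    have "\<bar>Sg t\<bar> \<le> (\<bar>u t1\<bar> + p / (2 * c1^2) * X^2) * ((cA / p) / X)"
      unfolding Sgeq abs_mult using uabs Th1up[of t] hX by (intro mult_mono) (auto simp: X_def)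
    also have "\<dots> = (cA / p) * (\<bar>u t1\<bar> / X + p / (2 * c1^2) * X)" using X by (simp add: field_simps power2_eq_square)
    also have "\<dots> \<le> (cA / p) * (\<bar>u t1\<bar> * X + p / (2 * c1^2) * X)"
    proof -
      have q: "\<bar>u t1\<bar> * 1 \<le> \<bar>u t1\<bar> * X" using mult_left_mono[OF X, of "\<bar>u t1\<bar>"] by simp
      have "\<bar>u t1\<bar> / X \<le> \<bar>u t1\<bar> / 1" using X by (intro divide_left_mono) auto
      then have "\<bar>u t1\<bar> / X \<le> \<bar>u t1\<bar> * X" using q by simp
      then show ?thesis using cA p0 by (intro mult_left_mono) auto
    qed
    also have "\<dots> = KS * X" unfolding KS_def by (simp add: algebra_simps)
    finally have S1: "\<bar>Sg t\<bar> \<le> KS * X" .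
    have Sg'eq: "Sg' t = (1 + Th2 p t * Sg t) / Th1 p t" using W[of t] nz[OF tt] by (simp add: field_simps)
    have "\<bar>Sg' t\<bar> = \<bar>1 + Th2 p t * Sg t\<bar> / \<bar>Th1 p t\<bar>" unfolding Sg'eq by (simp add: abs_divide)
    also have "\<dots> \<le> (1 + cT * KS) / (c1 / X)"
    proof (rule frac_le)
      have "\<bar>Th2 p t * Sg t\<bar> \<le> (cT / X) * (KS * X)"
        unfolding abs_mult using Th2up[of t] S1 by (intro mult_mono) (auto simp: X_def cT)
      also have "\<dots> = cT * KS" using X by simp
      finally show "\<bar>1 + Th2 p t * Sg t\<bar> \<le> 1 + cT * KS" by linarith
      show "0 \<le> 1 + cT * KS" using cT KS by simp
      show "0 < c1 / X" using c1 X by simp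
      show "c1 / X \<le> \<bar>Th1 p t\<bar>" using Th1low[OF tt] by (simp add: X_def)
    qed
    also have "\<dots> = ((1 + cT * KS) / c1) * X" using c1 X by (simp add: field_simps)
    finally have S2: "\<bar>Sg' t\<bar> \<le> ((1 + cT * KS) / c1) * X" .
    have KK: "KS \<le> K" "(1 + cT * KS) / c1 \<le> K" unfolding K KS_def by auto
    have "KS * X \<le> K * X" using KK X by (intro mult_right_mono) auto
    moreover have "((1 + cT * KS) / c1) * X \<le> K * X" using KK(2) X by (intro mult_right_mono) auto
    ultimately have "KS * X \<le> K * X" "((1 + cT * KS) / c1) * X \<le> K * X" by auto
    then show "\<bar>Sg t\<bar> \<le> K * exp (t/p) \<and> \<bar>Sg' t\<bar> \<le> K * exp (t/p)" using S1 S2 unfolding X_def by linarith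
  qed
qed

lemma cont_Sg: "continuous_on UNIV Sg"
  using dS by (meson DERIV_isCont continuous_at_imp_continuous_on)

lemma cont_Theta: "continuous_on UNIV (Theta_h p)"
  using Theta_deriv[OF p0] by (meson DERIV_isCont continuous_at_imp_continuous_on)

lemma cont_Th1: "continuous_on UNIV (Th1 p)"
  using Th1_deriv[OF p0] by (meson DERIV_isCont continuous_at_imp_continuous_on)

lemma left_bound:
  "\<exists>M. \<forall>t. alpha_p p * exp (2*t) \<le> 1/2 \<longrightarrow> \<bar>Sg t * Theta_h p t\<bar> \<le> M"
proof -
  define a where "a = alpha_p p"
  have a: "a > 0" "a < 1" using a_pos a_lt1 by (auto simp: a_def)
  define t2 where "t2 = ln (1/(2*a)) / 2"
  have E2: "a * exp (2*t2) = 1/2" unfolding t2_def using a by simp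
  have t2le: "t \<le> t2" if "a * exp (2*t) \<le> 1/2" for t
  proof -
    have "a * exp (2*t) \<le> a * exp (2*t2)" using E2 that by simp
    then have "exp (2*t) \<le> exp (2*t2)" using a mult_le_cancel_left_pos by blast
    then show ?thesis by simp
  qed
  have tle: "a * exp (2 * s) \<le> 1/2" if "s \<le> t2" for s
  proof -
    have e: "exp (2 * s) \<le> exp (2*t2)" using that by simp
    show ?thesis using mult_left_mono[OF e, of a] E2 a by simp
  qed
  define cL where "cL = exp (- ln (3 / 2) / p)"
  define c2 where "c2 = cL / (3*p)"
  have c2: "c2 > 0" unfolding c2_def cL_def using p0 by simp
  have Th1low: "c2 * exp (s/p) \<le> Th1 p s" if "s \<le> t2" for s
  proof -
    have s2: "alpha_p p * exp (2 * s) \<le> 1/2" using tle[OF that] a_def by simp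
    have "cL * exp (s / p) \<le> Theta_h p s" using Theta_ge_left[OF p0 s2] unfolding cL_def .
    moreover have "phi1 p s \<ge> 1/(3*p)" using phi1_left[OF p0 s2] .
    ultimately have "cL * exp (s / p) * (1/(3*p)) \<le> Theta_h p s * phi1 p s"
      using p0 Theta_pos[OF p0, of s] by (intro mult_mono) (auto simp: cL_def)
    then show ?thesis unfolding Th1_def c2_def by (simp add: field_simps)
  qed
  have Th1up: "Th1 p s \<le> exp (s/p) / p" for s
    using Th1_abs_le[of s] Theta_le1[OF p0, of s] p0 by (smt (verit) divide_right_mono)
  define u where "u s = Sg s / Th1 p s" for s
  define h where "h s = p / (2 * c2^2) * exp (- 2 * s / p)" for s
  have pos: "Th1 p s > 0" if "s \<le> t2" for s
    using Th1low[OF that] c2 by (metis exp_gt_zero mult_pos_pos order_less_le_trans)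
  have ud: "(u has_real_derivative 1 / (Th1 p s)^2) (at s)" if "s \<le> t2" for s
    unfolding u_def[abs_def] using u_deriv pos[OF that] by simp
  have hd: "(h has_real_derivative - exp (- 2 * s / p) / c2^2) (at s)" for s
    unfolding h_def[abs_def] using p0 c2 by (auto intro!: derivative_eq_intros simp: field_simps power2_eq_square)
  have uup: "1 / (Th1 p s)^2 \<le> exp (- 2 * s / p) / c2^2" if "s \<le> t2" for s
  proof -
    have "(c2 * exp (s/p))^2 \<le> (Th1 p s)^2" using Th1low[OF that] c2
      by (intro power_mono) auto
    moreover have "0 < (c2 * exp (s/p))^2" using c2 by simp
    moreover have "0 < (Th1 p s)^2" using pos[OF that] by simp
    ultimately have "1 / (Th1 p s)^2 \<le> 1 / (c2 * exp (s/p))^2" by (intro divide_left_mono) auto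
    also have "\<dots> = exp (- 2 * s / p) / c2^2"
      by (simp add: power_mult_distrib exp_minus power2_eq_square exp_add[symmetric] field_simps)
    finally show ?thesis .
  qed
  define Y2 where "Y2 = exp (t2/p)"
  show ?thesis
  proof (intro exI[of _ "\<bar>u t2\<bar> * Y2^2 / p + 1 / (2 * c2^2)"] allI impI)
    fix t assume t2': "alpha_p p * exp (2*t) \<le> 1/2"
    have tt: "t \<le> t2" using t2le t2' a_def by simp
    have m1: "u t \<le> u t2"
    proof (rule DERIV_nonneg_imp_nondecreasing[OF tt])
      fix x assume "t \<le> x" "x \<le> t2"
      then show "\<exists>y. (u has_real_derivative y) (at x) \<and> 0 \<le> y"
        using ud[of x] by (intro exI[of _ "1 / (Th1 p x)^2"]) simp
    qed
    have m2: "u t + h t \<ge> u t2 + h t2"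
    proof (rule DERIV_nonpos_imp_nonincreasing[OF tt])
      fix x assume "t \<le> x" "x \<le> t2"
      then show "\<exists>y. ((\<lambda>s. u s + h s) has_real_derivative y) (at x) \<and> y \<le> 0"
        using DERIV_add[OF ud[of x] hd[of x]] uup[of x]
        by (intro exI[of _ "1 / (Th1 p x)^2 + - exp (- 2 * x / p) / c2^2"]) simp
    qed
    have h0: "h t2 \<ge> 0" unfolding h_def using p0 by simp
    have uabs: "\<bar>u t\<bar> \<le> \<bar>u t2\<bar> + h t" using m1 m2 h0 by linarith
    define Y where "Y = exp (t/p)"
    have Y: "Y > 0" "Y \<le> Y2" unfolding Y_def Y2_def using tt p0 by (auto simp: divide_right_mono)
    have eq: "Sg t * Theta_h p t = u t * Th1 p t * Theta_h p t" unfolding u_def using pos[OF tt] by simp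
    have "\<bar>Sg t * Theta_h p t\<bar> \<le> (\<bar>u t2\<bar> + h t) * (Y / p) * Y"
    proof -
      have ht: "h t \<ge> 0" unfolding h_def using p0 by simp
      have "0 \<le> (\<bar>u t2\<bar> + h t) * (Y / p)" using ht p0 Y by simp
      moreover have "\<bar>u t\<bar> * \<bar>Th1 p t\<bar> \<le> (\<bar>u t2\<bar> + h t) * (Y / p)"
        using uabs Th1up[of t] pos[OF tt] ht by (intro mult_mono) (auto simp: Y_def)
      ultimately show ?thesis
        unfolding eq abs_mult using Theta_le1[OF p0, of t] Theta_pos[OF p0, of t]
        by (rule_tac mult_mono) (auto simp: Y_def)
    qed
    also have "\<dots> = \<bar>u t2\<bar> * Y^2 / p + h t * Y^2 / p" by (simp add: field_simps power2_eq_square add_divide_distrib)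
    also have "h t * Y^2 / p = 1 / (2 * c2^2)"
      unfolding h_def Y_def using p0 by (simp add: power2_eq_square exp_minus field_simps exp_add[symmetric])
    also have "\<bar>u t2\<bar> * Y^2 / p \<le> \<bar>u t2\<bar> * Y2^2 / p"
      using Y p0 by (intro divide_right_mono mult_left_mono power_mono) auto
    finally show "\<bar>Sg t * Theta_h p t\<bar> \<le> \<bar>u t2\<bar> * Y2^2 / p + 1 / (2 * c2^2)" by simp
  qed
qed

lemma SgTheta_bound: "\<exists>M. \<forall>s. \<bar>Sg s * Theta_h p s\<bar> \<le> M"
proof -
  define a where "a = alpha_p p"
  have a: "a > 0" using a_pos by (simp add: a_def)
  obtain M1 where M1: "\<And>t. a * exp (2*t) \<le> 1/2 \<Longrightarrow> \<bar>Sg t * Theta_h p t\<bar> \<le> M1"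
    using left_bound a_def by blast
  obtain K where K: "\<And>t. a * exp (2*t) \<ge> 2 \<Longrightarrow> \<bar>Sg t\<bar> \<le> K * exp (t/p)"
    using right_bound a_def by blast
  define cA where "cA = exp (- ln a / p)"
  define t1 where "t1 = ln (2/a) / 2"
  define t2 where "t2 = ln (1/(2*a)) / 2"
  have "compact ((\<lambda>s. Sg s * Theta_h p s) ` {t2..t1})"
    by (intro compact_continuous_image continuous_on_mult continuous_on_subset[OF cont_Sg] continuous_on_subset[OF cont_Theta]) auto
  then obtain M2 where M2: "\<And>s. s \<in> {t2..t1} \<Longrightarrow> \<bar>Sg s * Theta_h p s\<bar> \<le> M2"
    using compact_imp_bounded bounded_real by (metis (no_types, lifting) image_eqI)
  show ?thesis
  proof (intro exI[of _ "max M1 (max M2 (K * cA))"] allI)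
    fix s
    consider "a * exp (2 * s) \<le> 1/2" | "a * exp (2 * s) \<ge> 2" | "1/2 < a * exp (2 * s)" "a * exp (2 * s) < 2" by linarith
    then show "\<bar>Sg s * Theta_h p s\<bar> \<le> max M1 (max M2 (K * cA))"
    proof cases
      case 1 then show ?thesis using M1 by fastforce
    next
      case 2
      have "\<bar>Sg s * Theta_h p s\<bar> = \<bar>Sg s\<bar> * Theta_h p s" using Theta_pos[OF p0, of s] by (simp add: abs_mult)
      also have "\<dots> \<le> (K * exp (s/p)) * (cA * exp (- s / p))"
        using K[OF 2] Theta_le2[OF p0, of s] Theta_pos[OF p0, of s] unfolding cA_def a_def
        by (intro mult_mono) (auto intro: order_trans[OF abs_ge_zero])
      also have "\<dots> = K * cA" by (simp add: exp_minus field_simps)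
      finally show ?thesis by simp
    next
      case 3
      have "ln (1/(2*a)) \<le> ln (exp (2 * s))" using 3 a by (subst ln_le_cancel_iff) (auto simp: field_simps)
      moreover have "ln (exp (2 * s)) \<le> ln (2/a)" using 3 a by (subst ln_le_cancel_iff) (auto simp: field_simps)
      ultimately have "s \<in> {t2..t1}" unfolding t1_def t2_def by simp
      then show ?thesis using M2 by fastforce
    qed
  qed
qed

end


context sig begin

definition cA where "cA = exp (- ln (alpha_p p) / p)"

lemma cA_pos: "cA > 0" unfolding cA_def by simp

lemma Theta_sq: "Theta_h p s * Theta_h p s \<le> cA"
proof -
  have "Theta_h p s * Theta_h p s \<le> exp (s/p) * (cA * exp (- s / p))"
    using Theta_le1[OF p0, of s] Theta_le2[OF p0, of s] Theta_pos[OF p0, of s] unfolding cA_def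
    by (intro mult_mono) auto
  also have "\<dots> = cA" by (simp add: exp_minus field_simps)
  finally show ?thesis .
qed

lemma G_abs: "\<bar>exp (k * s) * Th1 p s * Theta_h p s\<bar> \<le> exp (k * s) * (Theta_h p s * Theta_h p s) / p"
proof -
  have "\<bar>exp (k * s) * Th1 p s * Theta_h p s\<bar> = exp (k * s) * \<bar>Th1 p s\<bar> * Theta_h p s"
    using Theta_pos[OF p0, of s] by (simp add: abs_mult)
  also have "\<dots> \<le> exp (k * s) * (Theta_h p s / p) * Theta_h p s"
    using Th1_abs_le[of s] Theta_pos[OF p0, of s] by (intro mult_right_mono mult_left_mono) auto
  finally show ?thesis by simp
qed

lemma cont_G: "continuous_on UNIV (\<lambda>s. exp (k * s) * Th1 p s * Theta_h p s)"
  by (intro continuous_intros cont_Th1 cont_Theta)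

lemma cont_H: "continuous_on UNIV (\<lambda>s. exp (k * s) * Sg s * Theta_h p s)"
  by (intro continuous_intros cont_Sg cont_Theta)

lemma G_ray:
  assumes k: "k > 0"
  shows "((\<lambda>s. exp (k * s) * Th1 p s * Theta_h p s) integrable_on {..t}) \<and>
         \<bar>integral {..t} (\<lambda>s. exp (k * s) * Th1 p s * Theta_h p s)\<bar> \<le> (cA / p) * exp (k * t) / k"
proof (rule ray_bound[OF cont_G k])
  fix s
  have "\<bar>exp (k * s) * Th1 p s * Theta_h p s\<bar> \<le> exp (k * s) * (Theta_h p s * Theta_h p s) / p" by (rule G_abs)
  also have "\<dots> \<le> exp (k * s) * cA / p" using Theta_sq[of s] p0 by (intro divide_right_mono mult_left_mono) auto
  finally show "\<bar>exp (k * s) * Th1 p s * Theta_h p s\<bar> \<le> cA / p * exp (k * s)" by (simp add: mult_ac)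
qed

lemma H_ray:
  assumes k: "k > 0" and M: "\<And>s. \<bar>Sg s * Theta_h p s\<bar> \<le> M"
  shows "((\<lambda>s. exp (k * s) * Sg s * Theta_h p s) integrable_on {..t}) \<and>
         \<bar>integral {..t} (\<lambda>s. exp (k * s) * Sg s * Theta_h p s)\<bar> \<le> M * exp (k * t) / k"
proof (rule ray_bound[OF cont_H k])
  fix s
  have "\<bar>exp (k * s) * Sg s * Theta_h p s\<bar> = exp (k * s) * \<bar>Sg s * Theta_h p s\<bar>" by (simp add: abs_mult)
  also have "\<dots> \<le> exp (k * s) * M" using M[of s] by (intro mult_left_mono) auto
  finally show "\<bar>exp (k * s) * Sg s * Theta_h p s\<bar> \<le> M * exp (k * s)" by (simp add: mult_ac)
qed

lemma G_bounded:
  assumes k: "k > 0" and d: "k < 2 / p"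
  shows "\<bar>integral {..t} (\<lambda>s. exp (k * s) * Th1 p s * Theta_h p s)\<bar> \<le> max 1 (cA^2) / p / k + max 1 (cA^2) / p / (2/p - k)"
proof -
  have "((\<lambda>s. exp (k * s) * Th1 p s * Theta_h p s) integrable_on {..t}) \<and>
     \<bar>integral {..t} (\<lambda>s. exp (k * s) * Th1 p s * Theta_h p s)\<bar> \<le> max 1 (cA^2) / p / k + max 1 (cA^2) / p / (2/p - k)"
  proof (rule ray_bound2[OF cont_G k])
    show "0 < 2/p - k" using d by simp
  next
    fix s :: real assume s: "s \<le> 0"
    have "Theta_h p s * Theta_h p s \<le> exp (s/p) * exp (s/p)"
      using Theta_le1[OF p0, of s] Theta_pos[OF p0, of s] by (intro mult_mono) auto
    also have "\<dots> \<le> 1" using s p0 by (simp add: exp_add[symmetric] divide_nonpos_pos add_nonpos_nonpos)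
    finally have T: "Theta_h p s * Theta_h p s \<le> max 1 (cA^2)" by simp
    have "\<bar>exp (k * s) * Th1 p s * Theta_h p s\<bar> \<le> exp (k * s) * (Theta_h p s * Theta_h p s) / p" by (rule G_abs)
    also have "\<dots> \<le> exp (k * s) * max 1 (cA^2) / p" using T p0 by (intro divide_right_mono mult_left_mono) auto
    finally show "\<bar>exp (k * s) * Th1 p s * Theta_h p s\<bar> \<le> max 1 (cA^2) / p * exp (k * s)" by (simp add: mult_ac)
  next
    fix s :: real assume s: "s \<ge> 0"
    have "Theta_h p s * Theta_h p s \<le> (cA * exp (- s / p)) * (cA * exp (- s / p))"
      using Theta_le2[OF p0, of s] Theta_pos[OF p0, of s] unfolding cA_def by (intro mult_mono) auto
    also have "\<dots> = cA^2 * exp (- 2 * s / p)" by (simp add: power2_eq_square exp_add[symmetric] field_simps)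
    also have "\<dots> \<le> max 1 (cA^2) * exp (- 2 * s / p)" by (intro mult_right_mono) auto
    finally have T: "Theta_h p s * Theta_h p s \<le> max 1 (cA^2) * exp (- 2 * s / p)" .
    have "\<bar>exp (k * s) * Th1 p s * Theta_h p s\<bar> \<le> exp (k * s) * (Theta_h p s * Theta_h p s) / p" by (rule G_abs)
    also have "\<dots> \<le> exp (k * s) * (max 1 (cA^2) * exp (- 2 * s / p)) / p" using T p0 by (intro divide_right_mono mult_left_mono) auto
    also have "\<dots> = max 1 (cA^2) / p * exp (- (2 / p - k) * s)"
      by (simp add: exp_add[symmetric] field_simps)
    finally show "\<bar>exp (k * s) * Th1 p s * Theta_h p s\<bar> \<le> max 1 (cA^2) / p * exp (- (2 / p - k) * s)" .
  qed
  then show ?thesis by blast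
qed

lemma M_ex: obtains M where "\<And>s. \<bar>Sg s * Theta_h p s\<bar> \<le> M"
  using SgTheta_bound by blast

lemma G_int: "(\<lambda>s. exp (k * s) * Th1 p s * Theta_h p s) integrable_on {..t}" if "k > 0" for k t
  using G_ray[OF that] by blast

lemma H_int: "(\<lambda>s. exp (k * s) * Sg s * Theta_h p s) integrable_on {..t}" if "k > 0" for k t
proof -
  obtain M where "\<And>s. \<bar>Sg s * Theta_h p s\<bar> \<le> M" using M_ex by blast
  then show ?thesis using H_ray[OF that] by blast
qed

lemma gamma_rep:
  defines "J \<equiv> \<lambda>k t. integral {..t} (\<lambda>s. exp (k * s) * Th1 p s * Theta_h p s)"
    and "Q \<equiv> \<lambda>k t. integral {..t} (\<lambda>s. exp (k * s) * Sg s * Theta_h p s)"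
  shows "gamma_h p lam b Sg = (\<lambda>t. Sg t * (- lam * b powr (-2*p) * J 2 t + b powr (-4*p) * J 4 t)
          - Th1 p t * (- lam * b powr (-2*p) * Q 2 t + b powr (-4*p) * Q 4 t))"
proof
  fix t
  have e1: "(\<lambda>s. f_b p lam b s * Th1 p s * Theta_h p s) =
     (\<lambda>s. (- lam * b powr (-2*p)) * (exp (2 * s) * Th1 p s * Theta_h p s) + b powr (-4*p) * (exp (4 * s) * Th1 p s * Theta_h p s))"
    by (rule ext) (simp add: f_b_def algebra_simps)
  have e2: "(\<lambda>s. f_b p lam b s * Sg s * Theta_h p s) =
     (\<lambda>s. (- lam * b powr (-2*p)) * (exp (2 * s) * Sg s * Theta_h p s) + b powr (-4*p) * (exp (4 * s) * Sg s * Theta_h p s))"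
    by (rule ext) (simp add: f_b_def algebra_simps)
  have i1: "integral {..t} (\<lambda>s. f_b p lam b s * Th1 p s * Theta_h p s) = - lam * b powr (-2*p) * J 2 t + b powr (-4*p) * J 4 t"
    unfolding e1 J_def
    by (subst integral_add[OF integrable_on_mult_right[OF G_int] integrable_on_mult_right[OF G_int]]) auto
  have i2: "integral {..t} (\<lambda>s. f_b p lam b s * Sg s * Theta_h p s) = - lam * b powr (-2*p) * Q 2 t + b powr (-4*p) * Q 4 t"
    unfolding e2 Q_def
    by (subst integral_add[OF integrable_on_mult_right[OF H_int] integrable_on_mult_right[OF H_int]]) auto
  show "gamma_h p lam b Sg t = Sg t * (- lam * b powr (-2*p) * J 2 t + b powr (-4*p) * J 4 t)
          - Th1 p t * (- lam * b powr (-2*p) * Q 2 t + b powr (-4*p) * Q 4 t)"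
    unfolding gamma_h_def deriv_Theta[OF p0] i1 i2 by simp
qed

lemma gamma_deriv:
  defines "J \<equiv> \<lambda>k t. integral {..t} (\<lambda>s. exp (k * s) * Th1 p s * Theta_h p s)"
    and "Q \<equiv> \<lambda>k t. integral {..t} (\<lambda>s. exp (k * s) * Sg s * Theta_h p s)"
  shows "deriv (gamma_h p lam b Sg) t = Sg' t * (- lam * b powr (-2*p) * J 2 t + b powr (-4*p) * J 4 t)
          - Th2 p t * (- lam * b powr (-2*p) * Q 2 t + b powr (-4*p) * Q 4 t)"
proof -
  let ?c1 = "- lam * b powr (-2*p)" let ?c2 = "b powr (-4*p)"
  have dJ: "(J k has_real_derivative exp (k * t) * Th1 p t * Theta_h p t) (at t)" if "k > 0" for k
    unfolding J_def using ray_deriv[OF cont_G G_int[OF that]] .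
  have dQ: "(Q k has_real_derivative exp (k * t) * Sg t * Theta_h p t) (at t)" if "k > 0" for k
    unfolding Q_def using ray_deriv[OF cont_H H_int[OF that]] .
  have dA1: "((\<lambda>t. ?c1 * J 2 t + ?c2 * J 4 t) has_real_derivative
      ?c1 * (exp (2 * t) * Th1 p t * Theta_h p t) + ?c2 * (exp (4 * t) * Th1 p t * Theta_h p t)) (at t)"
    by (intro DERIV_add DERIV_cmult dJ) auto
  have dA2: "((\<lambda>t. ?c1 * Q 2 t + ?c2 * Q 4 t) has_real_derivative
      ?c1 * (exp (2 * t) * Sg t * Theta_h p t) + ?c2 * (exp (4 * t) * Sg t * Theta_h p t)) (at t)"
    by (intro DERIV_add DERIV_cmult dQ) auto
  have d: "(gamma_h p lam b Sg has_real_derivative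
      (Sg' t * (?c1 * J 2 t + ?c2 * J 4 t) + (?c1 * (exp (2 * t) * Th1 p t * Theta_h p t) + ?c2 * (exp (4 * t) * Th1 p t * Theta_h p t)) * Sg t)
    - (Th2 p t * (?c1 * Q 2 t + ?c2 * Q 4 t) + (?c1 * (exp (2 * t) * Sg t * Theta_h p t) + ?c2 * (exp (4 * t) * Sg t * Theta_h p t)) * Th1 p t)) (at t)"
  proof -
    have g: "gamma_h p lam b Sg = (\<lambda>t. Sg t * (?c1 * J 2 t + ?c2 * J 4 t) - Th1 p t * (?c1 * Q 2 t + ?c2 * Q 4 t))"
      unfolding J_def Q_def by (rule gamma_rep)
    show ?thesis unfolding g by (intro DERIV_diff DERIV_mult dS Th1_deriv[OF p0] dA1 dA2)
  qed
  show ?thesis using DERIV_imp_deriv[OF d] by (simp add: algebra_simps)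
qed

end

lemma fin_arith:
  fixes S P A1 A2 V KR KP L B2 k1 \<kappa> Y e2 e4 m1 m2 \<beta>1 \<beta>2 :: real
  assumes V: "V > 0" and nn: "KR \<ge> 0" "KP \<ge> 0" "L \<ge> 0" "B2 \<ge> 0" "k1 \<ge> 0" "\<kappa> \<ge> 0" "Y \<ge> 0"
      "m1 \<ge> 0" "m2 \<ge> 0" "e2 \<ge> 0" "e4 \<ge> 0" "\<beta>1 \<ge> 0" "\<beta>2 \<ge> 0"
    and hS: "\<bar>S\<bar> \<le> KR * V" and hP: "\<bar>P\<bar> \<le> KP / V"
    and h1: "\<bar>A1\<bar> \<le> L * B2 * k1 + \<kappa> * Y" and h2: "\<bar>A2\<bar> \<le> L * (e2 * \<beta>1) * m1 + (e4 * \<beta>2) * m2"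
  shows "\<bar>S * A1 - P * A2\<bar> \<le> (1 + KR * (k1 + \<kappa>) + KP * (m1 * e2 + m2 * e4)) * ((L * \<beta>1 + \<beta>2) * (1 / V) + (L * B2 + Y) * V)"
proof -
  define C where "C = 1 + KR * (k1 + \<kappa>) + KP * (m1 * e2 + m2 * e4)"
  have c1: "KR * k1 \<le> C" "KR * \<kappa> \<le> C" "KP * (m1 * e2) \<le> C" "KP * (m2 * e4) \<le> C"
    unfolding C_def using nn by (auto simp: algebra_simps intro!: add_nonneg_nonneg mult_nonneg_nonneg)
  have q0: "\<bar>S * A1 - P * A2\<bar> \<le> \<bar>S\<bar> * \<bar>A1\<bar> + \<bar>P\<bar> * \<bar>A2\<bar>" by (simp add: abs_mult abs_triangle_ineq4[THEN order_trans])
  have q1: "\<bar>S\<bar> * \<bar>A1\<bar> \<le> (KR * V) * (L * B2 * k1 + \<kappa> * Y)"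
    using hS h1 V nn by (intro mult_mono) auto
  have q2: "\<bar>P\<bar> * \<bar>A2\<bar> \<le> (KP / V) * (L * (e2 * \<beta>1) * m1 + (e4 * \<beta>2) * m2)"
    using hP h2 V nn by (intro mult_mono) auto
  have "(KR * V) * (L * B2 * k1 + \<kappa> * Y) = V * ((KR * k1) * (L * B2) + (KR * \<kappa>) * Y)" by (simp add: algebra_simps)
  also have "\<dots> \<le> V * (C * (L * B2) + C * Y)"
    using c1 V nn by (intro mult_left_mono add_mono mult_right_mono) auto
  finally have q3: "(KR * V) * (L * B2 * k1 + \<kappa> * Y) \<le> V * (C * (L * B2) + C * Y)" .
  have "(KP / V) * (L * (e2 * \<beta>1) * m1 + (e4 * \<beta>2) * m2) = (1 / V) * ((KP * (m1 * e2)) * (L * \<beta>1) + (KP * (m2 * e4)) * \<beta>2)"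
    by (simp add: algebra_simps)
  also have "\<dots> \<le> (1 / V) * (C * (L * \<beta>1) + C * \<beta>2)"
    using c1 V nn by (intro mult_left_mono add_mono mult_right_mono) auto
  finally have q4: "(KP / V) * (L * (e2 * \<beta>1) * m1 + (e4 * \<beta>2) * m2) \<le> (1 / V) * (C * (L * \<beta>1) + C * \<beta>2)" .
  have q5: "V * (C * (L * B2) + C * Y) + (1 / V) * (C * (L * \<beta>1) + C * \<beta>2) = C * ((L * \<beta>1 + \<beta>2) * (1 / V) + (L * B2 + Y) * V)"
    by (simp add: algebra_simps)
  have "\<bar>S * A1 - P * A2\<bar> \<le> C * ((L * \<beta>1 + \<beta>2) * (1 / V) + (L * B2 + Y) * V)"
    using q0 q1 q2 q3 q4 q5 by linarith
  then show ?thesis unfolding C_def .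
qed



lemma abs_comb:
  fixes l B C x y :: real assumes "B \<ge> 0" "C \<ge> 0"
  shows "\<bar>- l * B * x + C * y\<bar> \<le> \<bar>l\<bar> * B * \<bar>x\<bar> + C * \<bar>y\<bar>"
proof -
  have "\<bar>- l * B * x + C * y\<bar> \<le> \<bar>- l * B * x\<bar> + \<bar>C * y\<bar>" by (rule abs_triangle_ineq)
  then show ?thesis using assms by (simp add: abs_mult)
qed

lemma exp_powr_bound:
  fixes b t T a p k :: real
  assumes b: "b > 0" and t: "t \<le> T + a * p * ln b" and k: "k \<ge> 0"
  shows "b powr (-k * p) * exp (k * t) \<le> exp (k * T) * b powr (-k * p * (1 - a))"
proof -
  have kt: "k * t \<le> k * T + k * a * p * ln b" using mult_left_mono[OF t k] by (simp add: algebra_simps)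
  have "exp (k * t) \<le> exp (k * T + k * a * p * ln b)" using kt by simp
  also have "\<dots> = exp (k * T) * b powr (k * a * p)" using b by (simp add: exp_add powr_def mult_ac)
  finally have "b powr (-k * p) * exp (k * t) \<le> b powr (-k * p) * (exp (k * T) * b powr (k * a * p))"
    by (intro mult_left_mono) auto
  also have "\<dots> = exp (k * T) * (b powr (-k * p) * b powr (k * a * p))" by simp
  also have "b powr (-k * p) * b powr (k * a * p) = b powr (-k * p * (1 - a))"
    by (simp add: powr_add[symmetric] algebra_simps)
  finally show ?thesis .
qed

theorem mainTheorem4:
  fixes p lam :: real and Sg Sg' Sg'' :: "real \<Rightarrow> real"
  assumes hp: "0 < p" "p < 1"
    and hS1: "\<And>t. (Sg has_real_derivative Sg' t) (at t)"
    and hS2: "\<And>t. (Sg' has_real_derivative Sg'' t) (at t)"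
    and hODE: "\<And>t. Sg'' t - (1 / p^2) * Sg t
                 + (2 * p + 1) * (Theta_h p t) powr (2 * p) * Sg t = 0"
    and hW: "\<And>t. deriv (Theta_h p) t * Sg' t - deriv (deriv (Theta_h p)) t * Sg t = 1"
  shows "\<forall>T > 0. \<forall>a. 0 < a \<and> a < p / (1 + p) \<longrightarrow>
    (\<exists>b0 > 0. \<exists>C > 0. \<forall>b \<ge> b0. \<forall>t \<in> {a * p * ln b .. T + a * p * ln b}.
      (p < 1/2 \<longrightarrow>
         (let B = C * ((\<bar>lam\<bar> * b powr (-2 * p * (1 - a)) + b powr (-4 * p * (1 - a))) * exp (- t / p)
                      + (\<bar>lam\<bar> * b powr (-2 * p) + b powr (-4 * p)) * exp (t / p))
          in \<bar>gamma_h p lam b Sg t\<bar> \<le> B \<and> \<bar>deriv (gamma_h p lam b Sg) t\<bar> \<le> B))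
    \<and> (1/2 \<le> p \<longrightarrow>
         (let B = C * ((\<bar>lam\<bar> * b powr (-2 * p * (1 - a)) + b powr (-4 * p * (1 - a))) * exp (- t / p)
                      + (\<bar>lam\<bar> * b powr (-2 * p) + b powr (-4 * p * (1 - a))) * exp (t / p))
          in \<bar>gamma_h p lam b Sg t\<bar> \<le> B \<and> \<bar>deriv (gamma_h p lam b Sg) t\<bar> \<le> B)))"
proof -
  have p0: "p > 0" using hp by simp
  have W': "\<And>t. Th1 p t * Sg' t - Th2 p t * Sg t = 1" using hW deriv_Theta[OF p0] deriv2_Theta[OF p0] by simp
  interpret sig p Sg Sg' using hp hS1 W' by unfold_locales auto
  obtain M where M: "\<And>s. \<bar>Sg s * Theta_h p s\<bar> \<le> M" using SgTheta_bound by blast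
  have M0: "M \<ge> 0" using M[of 0] by simp
  obtain KR where KR: "\<And>t. alpha_p p * exp (2*t) \<ge> 2 \<Longrightarrow> \<bar>Sg t\<bar> \<le> KR * exp (t/p) \<and> \<bar>Sg' t\<bar> \<le> KR * exp (t/p)"
    using right_bound by blast
  define t1 where "t1 = ln (2 / alpha_p p) / 2"
  have E1: "alpha_p p * exp (2*t1) = 2" unfolding t1_def using a_pos by simp
  have t1pos: "t1 \<ge> 0"
  proof -
    have "2 / alpha_p p > 1" using a_pos a_lt1 by simp
    then show ?thesis unfolding t1_def by simp
  qed
  have tge: "alpha_p p * exp (2 * s) \<ge> 2" if "t1 \<le> s" for s
  proof -
    have e: "exp (2*t1) \<le> exp (2 * s)" using that by simp
    show ?thesis using mult_left_mono[OF e, of "alpha_p p"] E1 a_pos by simp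
  qed
  have KR0: "KR \<ge> 0"
  proof -
    have "0 \<le> KR * exp (t1/p)" using KR[OF tge[of t1]] by (meson abs_ge_zero order_trans order_refl)
    then show ?thesis by (simp add: zero_le_mult_iff)
  qed
  define cT where "cT = cA * (1/p^2 + 4/p)"
  define KP where "KP = cA / p + cT"
  have cT0: "cT \<ge> 0" unfolding cT_def using cA_pos p0 by simp
  have KP0: "KP \<ge> 0" unfolding KP_def using cA_pos p0 cT0 by simp
  have Th1b: "\<bar>Th1 p s\<bar> \<le> KP / exp (s/p)" for s
  proof -
    have "\<bar>Th1 p s\<bar> \<le> Theta_h p s / p" by (rule Th1_abs_le)
    also have "\<dots> \<le> (cA * exp (- s / p)) / p" using Theta_le2[OF p0, of s] p0 unfolding cA_def by (simp add: divide_right_mono)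
    also have "\<dots> = (cA / p) / exp (s/p)" by (simp add: exp_minus field_simps)
    also have "\<dots> \<le> KP / exp (s/p)"
    proof -
      have "cA / p \<le> KP" unfolding KP_def using cT0 by simp
      then show ?thesis by (intro divide_right_mono) auto
    qed
    finally show ?thesis .
  qed
  have Th2b: "\<bar>Th2 p s\<bar> \<le> KP / exp (s/p)" for s
  proof -
    have "\<bar>Th2 p s\<bar> \<le> Theta_h p s * (1/p^2 + 4/p)" by (rule Th2_abs_le)
    also have "\<dots> \<le> (cA * exp (- s / p)) * (1/p^2 + 4/p)" using Theta_le2[OF p0, of s] p0 unfolding cA_def by (intro mult_right_mono) auto
    also have "\<dots> = cT / exp (s/p)" unfolding cT_def by (simp add: exp_minus field_simps)
    also have "\<dots> \<le> KP / exp (s/p)"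
    proof -
      have "cT \<le> KP" unfolding KP_def using cA_pos p0 by simp
      then show ?thesis by (intro divide_right_mono) auto
    qed
    finally show ?thesis .
  qed
  define KJ2 where "KJ2 = max 1 (cA^2) / p / 2 + max 1 (cA^2) / p / (2/p - 2)"
  define KJ4 where "KJ4 = \<bar>max 1 (cA^2) / p / 4 + max 1 (cA^2) / p / (2/p - 4)\<bar>"
  have two: "(2::real) < 2 / p" using hp by (simp add: field_simps)
  have KJ20: "KJ2 \<ge> 0" unfolding KJ2_def using p0 two by (intro add_nonneg_nonneg divide_nonneg_nonneg) auto
  have J2b: "\<bar>integral {..t} (\<lambda>s. exp (2 * s) * Th1 p s * Theta_h p s)\<bar> \<le> KJ2" for t
    unfolding KJ2_def using G_bounded[of 2 t] two by simp
  have J4b: "\<bar>integral {..t} (\<lambda>s. exp (4 * s) * Th1 p s * Theta_h p s)\<bar> \<le> KJ4" if "p < 1/2" for t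
  proof -
    have "(4::real) < 2 / p" using that p0 by (simp add: field_simps)
    then show ?thesis unfolding KJ4_def using G_bounded[of 4 t] by simp
  qed
  have J4b': "\<bar>integral {..t} (\<lambda>s. exp (4 * s) * Th1 p s * Theta_h p s)\<bar> \<le> cA / p * exp (4 * t) / 4" for t
    using G_ray[of 4 t] by simp
  have Q2b: "\<bar>integral {..t} (\<lambda>s. exp (2 * s) * Sg s * Theta_h p s)\<bar> \<le> M * exp (2 * t) / 2" for t
    using H_ray[of 2 M t] M by simp
  have Q4b: "\<bar>integral {..t} (\<lambda>s. exp (4 * s) * Sg s * Theta_h p s)\<bar> \<le> M * exp (4 * t) / 4" for t
    using H_ray[of 4 M t] M by simp
  show ?thesis
  proof (intro allI impI)
    fix T :: real and a :: real
    assume T: "T > 0" and a: "0 < a \<and> a < p / (1 + p)"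
    define b0 where "b0 = exp (t1 / (a * p))"
    define \<kappa> where "\<kappa> = KJ4 + cA * exp (4 * T) / (4 * p)"
    define C where "C = 1 + KR * (KJ2 + \<kappa>) + KP * (M / 2 * exp (2 * T) + M / 4 * exp (4 * T))"
    have \<kappa>0: "\<kappa> \<ge> 0" unfolding \<kappa>_def KJ4_def using cA_pos p0 by simp
    have C0: "C > 0" unfolding C_def using KR0 KJ20 \<kappa>0 KP0 M0
      by (intro add_pos_nonneg mult_nonneg_nonneg) auto
    have b00: "b0 > 0" unfolding b0_def by simp
    show "\<exists>b0>0. \<exists>C>0. \<forall>b\<ge>b0. \<forall>t\<in>{a * p * ln b..T + a * p * ln b}.
      (p < 1/2 \<longrightarrow>
         (let B = C * ((\<bar>lam\<bar> * b powr (-2 * p * (1 - a)) + b powr (-4 * p * (1 - a))) * exp (- t / p)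
                      + (\<bar>lam\<bar> * b powr (-2 * p) + b powr (-4 * p)) * exp (t / p))
          in \<bar>gamma_h p lam b Sg t\<bar> \<le> B \<and> \<bar>deriv (gamma_h p lam b Sg) t\<bar> \<le> B))
    \<and> (1/2 \<le> p \<longrightarrow>
         (let B = C * ((\<bar>lam\<bar> * b powr (-2 * p * (1 - a)) + b powr (-4 * p * (1 - a))) * exp (- t / p)
                      + (\<bar>lam\<bar> * b powr (-2 * p) + b powr (-4 * p * (1 - a))) * exp (t / p))
          in \<bar>gamma_h p lam b Sg t\<bar> \<le> B \<and> \<bar>deriv (gamma_h p lam b Sg) t\<bar> \<le> B))"
    proof (rule exI[of _ b0], rule conjI, rule b00, rule exI[of _ C], rule conjI, rule C0, intro allI impI ballI conjI)
      fix b t assume b: "b0 \<le> b" and t: "t \<in> {a * p * ln b..T + a * p * ln b}"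
      have bpos: "b > 0" using b unfolding b0_def by (meson exp_gt_zero less_le_trans)
      have "t1 / (a * p) \<le> ln b" using b bpos unfolding b0_def by (simp add: ln_ge_iff)
      then have "t1 \<le> a * p * ln b" using a p0 by (simp add: pos_divide_le_eq mult.commute)
      then have tt: "t1 \<le> t" using t by simp
      have E: "alpha_p p * exp (2*t) \<ge> 2" using tge[OF tt] by simp
      have tup: "t \<le> T + a * p * ln b" using t by simp
      define V where "V = exp (t/p)"
      have V: "V > 0" unfolding V_def by simp
      have em: "exp (- t / p) = 1 / V" unfolding V_def by (simp add: exp_minus inverse_eq_divide)
      define B2 where "B2 = b powr (-2 * p)"
      define B4 where "B4 = b powr (-4 * p)"
      define \<beta>1 where "\<beta>1 = b powr (-2 * p * (1 - a))"
      define \<beta>2 where "\<beta>2 = b powr (-4 * p * (1 - a))"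
      have Z2: "B2 * exp (2 * t) \<le> exp (2 * T) * \<beta>1"
        unfolding B2_def \<beta>1_def using exp_powr_bound[OF bpos tup, of 2] by simp
      have Z4: "B4 * exp (4 * t) \<le> exp (4 * T) * \<beta>2"
        unfolding B4_def \<beta>2_def using exp_powr_bound[OF bpos tup, of 4] by simp
      have B2nn: "B2 \<ge> 0" "B4 \<ge> 0" "\<beta>1 \<ge> 0" "\<beta>2 \<ge> 0" unfolding B2_def B4_def \<beta>1_def \<beta>2_def by auto
      define J2 where "J2 = integral {..t} (\<lambda>s. exp (2 * s) * Th1 p s * Theta_h p s)"
      define J4 where "J4 = integral {..t} (\<lambda>s. exp (4 * s) * Th1 p s * Theta_h p s)"
      define Q2 where "Q2 = integral {..t} (\<lambda>s. exp (2 * s) * Sg s * Theta_h p s)"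
      define Q4 where "Q4 = integral {..t} (\<lambda>s. exp (4 * s) * Sg s * Theta_h p s)"
      define A1 where "A1 = - lam * B2 * J2 + B4 * J4"
      define A2 where "A2 = - lam * B2 * Q2 + B4 * Q4"
      have gam: "gamma_h p lam b Sg t = Sg t * A1 - Th1 p t * A2"
        unfolding A1_def A2_def J2_def J4_def Q2_def Q4_def B2_def B4_def gamma_rep[of lam b] by simp
      have dgam: "deriv (gamma_h p lam b Sg) t = Sg' t * A1 - Th2 p t * A2"
        unfolding A1_def A2_def J2_def J4_def Q2_def Q4_def B2_def B4_def gamma_deriv[of lam b t] by simp
      have hA2: "\<bar>A2\<bar> \<le> \<bar>lam\<bar> * (exp (2 * T) * \<beta>1) * (M / 2) + (exp (4 * T) * \<beta>2) * (M / 4)"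
      proof -
        have "\<bar>A2\<bar> \<le> \<bar>lam\<bar> * B2 * \<bar>Q2\<bar> + B4 * \<bar>Q4\<bar>" unfolding A2_def using B2nn
          by (intro abs_comb) auto
        also have "\<dots> \<le> \<bar>lam\<bar> * B2 * (M * exp (2 * t) / 2) + B4 * (M * exp (4 * t) / 4)"
          using Q2b[of t] Q4b[of t] B2nn unfolding Q2_def Q4_def by (intro add_mono mult_left_mono) auto
        also have "\<dots> = \<bar>lam\<bar> * (B2 * exp (2 * t)) * (M / 2) + (B4 * exp (4 * t)) * (M / 4)" by (simp add: mult_ac)
        also have "\<dots> \<le> \<bar>lam\<bar> * (exp (2 * T) * \<beta>1) * (M / 2) + (exp (4 * T) * \<beta>2) * (M / 4)"
          using Z2 Z4 M0 by (intro add_mono mult_right_mono mult_left_mono) auto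
        finally show ?thesis .
      qed
      have hA1base: "\<bar>A1\<bar> \<le> \<bar>lam\<bar> * B2 * KJ2 + B4 * \<bar>J4\<bar>"
      proof -
        have "\<bar>A1\<bar> \<le> \<bar>lam\<bar> * B2 * \<bar>J2\<bar> + B4 * \<bar>J4\<bar>" unfolding A1_def using B2nn
          by (intro abs_comb) auto
        also have "\<dots> \<le> \<bar>lam\<bar> * B2 * KJ2 + B4 * \<bar>J4\<bar>"
          using J2b[of t] B2nn unfolding J2_def by (intro add_mono mult_left_mono) auto
        finally show ?thesis .
      qed
      have SgS: "\<bar>Sg t\<bar> \<le> KR * V" "\<bar>Sg' t\<bar> \<le> KR * V" using KR[OF E] unfolding V_def by auto
      have ThS: "\<bar>Th1 p t\<bar> \<le> KP / V" "\<bar>Th2 p t\<bar> \<le> KP / V" using Th1b[of t] Th2b[of t] unfolding V_def by auto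
      have Ceq: "C = 1 + KR * (KJ2 + \<kappa>) + KP * (M / 2 * exp (2 * T) + M / 4 * exp (4 * T))" by (rule C_def)
      have fin: "\<bar>X * A1 - P * A2\<bar> \<le> C * ((\<bar>lam\<bar> * \<beta>1 + \<beta>2) * (1 / V) + (\<bar>lam\<bar> * B2 + Y) * V)"
        if "\<bar>X\<bar> \<le> KR * V" "\<bar>P\<bar> \<le> KP / V" "\<bar>A1\<bar> \<le> \<bar>lam\<bar> * B2 * KJ2 + \<kappa> * Y" "Y \<ge> 0" for X P Y
        unfolding Ceq
        by (rule fin_arith[OF V KR0 KP0 abs_ge_zero B2nn(1) KJ20 \<kappa>0 that(4) _ _ _ _ B2nn(3) B2nn(4) that(1) that(2) that(3) hA2])
           (use M0 in auto)
      show "p < 1/2 \<Longrightarrow> (let B = C * ((\<bar>lam\<bar> * b powr (-2 * p * (1 - a)) + b powr (-4 * p * (1 - a))) * exp (- t / p)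
                      + (\<bar>lam\<bar> * b powr (-2 * p) + b powr (-4 * p)) * exp (t / p))
          in \<bar>gamma_h p lam b Sg t\<bar> \<le> B \<and> \<bar>deriv (gamma_h p lam b Sg) t\<bar> \<le> B)"
      proof -
        assume ph: "p < 1/2"
        have "\<bar>A1\<bar> \<le> \<bar>lam\<bar> * B2 * KJ2 + \<kappa> * B4"
        proof -
          have "B4 * \<bar>J4\<bar> \<le> B4 * KJ4" using J4b[OF ph, of t] B2nn unfolding J4_def by (intro mult_left_mono) auto
          also have "\<dots> \<le> \<kappa> * B4" unfolding \<kappa>_def using B2nn cA_pos p0 by (simp add: algebra_simps)
          finally show ?thesis using hA1base by linarith
        qed
        then have f1: "\<bar>Sg t * A1 - Th1 p t * A2\<bar> \<le> C * ((\<bar>lam\<bar> * \<beta>1 + \<beta>2) * (1 / V) + (\<bar>lam\<bar> * B2 + B4) * V)"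
          and f2: "\<bar>Sg' t * A1 - Th2 p t * A2\<bar> \<le> C * ((\<bar>lam\<bar> * \<beta>1 + \<beta>2) * (1 / V) + (\<bar>lam\<bar> * B2 + B4) * V)"
          using fin SgS ThS B2nn by auto
        show ?thesis using f1 f2 unfolding Let_def gam dgam em V_def[symmetric] B2_def B4_def \<beta>1_def \<beta>2_def by simp
      qed
      show "1/2 \<le> p \<Longrightarrow> (let B = C * ((\<bar>lam\<bar> * b powr (-2 * p * (1 - a)) + b powr (-4 * p * (1 - a))) * exp (- t / p)
                      + (\<bar>lam\<bar> * b powr (-2 * p) + b powr (-4 * p * (1 - a))) * exp (t / p))
          in \<bar>gamma_h p lam b Sg t\<bar> \<le> B \<and> \<bar>deriv (gamma_h p lam b Sg) t\<bar> \<le> B)"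
      proof -
        have "\<bar>A1\<bar> \<le> \<bar>lam\<bar> * B2 * KJ2 + \<kappa> * \<beta>2"
        proof -
          have "B4 * \<bar>J4\<bar> \<le> B4 * (cA / p * exp (4 * t) / 4)" using J4b'[of t] B2nn unfolding J4_def by (intro mult_left_mono) auto
          also have "\<dots> = (cA / (4 * p)) * (B4 * exp (4 * t))" by (simp add: mult_ac)
          also have "\<dots> \<le> (cA / (4 * p)) * (exp (4 * T) * \<beta>2)" using Z4 cA_pos p0 by (intro mult_left_mono) auto
          also have "\<dots> \<le> \<kappa> * \<beta>2" unfolding \<kappa>_def KJ4_def using B2nn by (simp add: algebra_simps)
          finally show ?thesis using hA1base by linarith
        qed
        then have f1: "\<bar>Sg t * A1 - Th1 p t * A2\<bar> \<le> C * ((\<bar>lam\<bar> * \<beta>1 + \<beta>2) * (1 / V) + (\<bar>lam\<bar> * B2 + \<beta>2) * V)"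
          and f2: "\<bar>Sg' t * A1 - Th2 p t * A2\<bar> \<le> C * ((\<bar>lam\<bar> * \<beta>1 + \<beta>2) * (1 / V) + (\<bar>lam\<bar> * B2 + \<beta>2) * V)"
          using fin SgS ThS B2nn by auto
        show ?thesis using f1 f2 unfolding Let_def gam dgam em V_def[symmetric] B2_def B4_def \<beta>1_def \<beta>2_def by simp
      qed
    qed
  qed
qed

end
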